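(* Let $T>0$ and let $(d(t),\,t\in[0,T])$ be a nonnegative, integrable, weakly increasing demand function. Suppose all stores are full at time $0$, i.e. $E_i(0)=\overline E_i$ for all $i\in\mathcal S$, and that some cross-charging policy, with store levels $(E_i(t))$, completely serves $d$ on $[0,T]$. Then there is a policy without cross-charging (all $r_i(t)\ge0$), with store levels $(\hat E_i(t))$, that completely serves $d$ on $[0,T]$ and satisfies $\hat E_i(T)\ge E_i(T)$ for every $i\in\mathcal S$.
   Context: A finite set $\mathcal S$ of energy stores is given. Store $i\in\mathcal S$ has capacity $\overline E_i>0$, maximum discharge rate $P_i>0$, maximum charge rate $P'_i\ge0$ and round-trip efficiency $\eta_i\in(0,1]$. A cross-charging policy is a choice of measurable rate functions $(r_i(t),\,t\ge0)$ with $E_i(t)=E_i(0)-\int_0^t r_i(u)\,du$, subject to $0\le E_i(t)\le\overline E_i$, $-P'_i\le r_i(t)\le P_i$, and $$0\le\sum_{i:\,r_i(t)\ge0}r_i(t)+\sum_{i:\,r_i(t)<0}r_i(t)/\eta_i\le d(t)\quad\text{for all }t$$ (negative $r_i$ means store $i$ is charged, drawing energy at rate $-r_i/\eta_i$ from other stores; no external energy is available). It completely serves $d$ on an interval $I$ if the middle expression equals $d(t)$ for almost every $t\in I$. A policy with all $r_i(t)\ge0$ is one without cross-charging. *)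

theory Defs
  imports "HOL-Analysis.Analysis"
begin

definition level :: "('a \<Rightarrow> real) \<Rightarrow> ('a \<Rightarrow> real \<Rightarrow> real) \<Rightarrow> 'a \<Rightarrow> real \<Rightarrow> real" where
  "level E0 r i t = E0 i - (LINT u:{0..t}|lborel. r i u)"

text \<open>Total energy drawn from the stores at time t (charging store i at rate -r_i
  draws -r_i/eta_i from the others).\<close>
definition gross_draw :: "'a set \<Rightarrow> ('a \<Rightarrow> real) \<Rightarrow> ('a \<Rightarrow> real \<Rightarrow> real) \<Rightarrow> real \<Rightarrow> real" where
  "gross_draw S eta r t = (\<Sum>i\<in>S. if 0 \<le> r i t then r i t else r i t / eta i)"

definition is_policy ::
  "'a set \<Rightarrow> ('a \<Rightarrow> real) \<Rightarrow> ('a \<Rightarrow> real) \<Rightarrow> ('a \<Rightarrow> real) \<Rightarrow> ('a \<Rightarrow> real)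
   \<Rightarrow> (real \<Rightarrow> real) \<Rightarrow> real \<Rightarrow> ('a \<Rightarrow> real) \<Rightarrow> ('a \<Rightarrow> real \<Rightarrow> real) \<Rightarrow> bool" where
  "is_policy S Ebar P P' eta d T E0 r \<longleftrightarrow>
     (\<forall>i\<in>S. set_borel_measurable lborel {0..T} (r i)) \<and>
     (\<forall>i\<in>S. \<forall>t\<in>{0..T}. 0 \<le> level E0 r i t \<and> level E0 r i t \<le> Ebar i
                       \<and> - P' i \<le> r i t \<and> r i t \<le> P i) \<and>
     (\<forall>t\<in>{0..T}. 0 \<le> gross_draw S eta r t \<and> gross_draw S eta r t \<le> d t)"

definition completely_serves ::
  "'a set \<Rightarrow> ('a \<Rightarrow> real) \<Rightarrow> ('a \<Rightarrow> real \<Rightarrow> real) \<Rightarrow> (real \<Rightarrow> real) \<Rightarrow> real set \<Rightarrow> bool" where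
  "completely_serves S eta r d I \<longleftrightarrow> (AE t in lborel. t \<in> I \<longrightarrow> gross_draw S eta r t = d t)"

end

theory Submission
  imports Defs
begin

lemma int_ind:
  fixes g :: "real \<Rightarrow> real"
  assumes "g \<in> borel_measurable borel" "\<And>t. \<bar>g t\<bar> \<le> B" "X \<in> sets lborel" "X \<subseteq> {a..b}"
  shows "integrable lborel (\<lambda>t. indicator X t * g t)"
proof -
  have 1: "integrable lborel (\<lambda>t. B * indicator {a..b} t)" by (intro integrable_mult_right integrable_real_indicator) (auto simp: emeasure_lborel_Icc_eq)
  have 2: "(\<lambda>t. indicator X t * g t) \<in> borel_measurable lborel" using assms by simp
  have 3: "AE x in lborel. norm (indicator X x * g x) \<le> norm (B * indicator {a .. b} x)"
  proof (rule AE_I2)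
    fix x
    have "0 \<le> B" using assms(2)[of 0] by linarith
    then show "norm (indicator X x * g x) \<le> norm (B * indicator {a .. b} x)"
      using assms(2)[of x] assms(4) by (auto simp: indicator_def abs_mult)
  qed
  show ?thesis using Bochner_Integration.integrable_bound[OF 1 2 3] .
qed

definition cl :: "real \<Rightarrow> real \<Rightarrow> real \<Rightarrow> real" where
  "cl Q a x = min Q (max 0 (x - a))"

lemma cl_lip: "0 \<le> Q \<Longrightarrow> \<bar>cl Q a x - cl Q b x\<bar> \<le> \<bar>a - b\<bar>"
  unfolding cl_def by (auto simp: min_def max_def)

lemma cl_lip2: "0 \<le> Q \<Longrightarrow> x \<le> y \<Longrightarrow> cl Q a x \<le> cl Q a y \<and> cl Q a y - cl Q a x \<le> y - x"
  unfolding cl_def by (auto simp: min_def max_def)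

lemma cl_bnd: "0 \<le> Q \<Longrightarrow> 0 \<le> a \<Longrightarrow> 0 \<le> x \<Longrightarrow> 0 \<le> cl Q a x \<and> cl Q a x \<le> Q \<and> cl Q a x \<le> x"
  unfolding cl_def by (auto simp: min_def max_def)

lemma cl_case1: "0 \<le> Q \<Longrightarrow> a \<le> p \<Longrightarrow> 0 \<le> x \<Longrightarrow>
   max 0 (x - cl Q a x - p) = max 0 (x - (p + Q))"
  unfolding cl_def by (auto simp: min_def max_def)

lemma cl_case2: "0 \<le> Q \<Longrightarrow> p < a \<Longrightarrow> 0 \<le> x \<Longrightarrow>
   max 0 (x - cl Q a x - p) = max 0 (x - p) - cl Q a x"
  unfolding cl_def by (auto simp: min_def max_def)

lemma cl_meas[measurable]: assumes [measurable]: "f \<in> borel_measurable M" shows "(\<lambda>t. cl Q a (f t)) \<in> borel_measurable M"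
  unfolding cl_def by measurable

lemma alloc:
  fixes S :: "'a set" and P c :: "'a \<Rightarrow> real" and T D :: real
  assumes "finite S" "\<forall>i\<in>S. 0 \<le> P i" "0 \<le> T"
  shows "\<And>d. d \<in> borel_measurable borel \<Longrightarrow> (\<forall>t. 0 \<le> d t \<and> d t \<le> D) \<Longrightarrow> mono_on {0..T} d \<Longrightarrow>
     (\<forall>A\<subseteq>S. (\<integral>t. indicator {0..T} t * max 0 (d t - sum P (S - A)) \<partial>lborel) \<le> sum c A) \<Longrightarrow>
     \<exists>r. (\<forall>i\<in>S. r i \<in> borel_measurable borel \<and> (\<forall>t. 0 \<le> r i t \<and> r i t \<le> P i)
              \<and> (\<integral>t. indicator {0..T} t * r i t \<partial>lborel) \<le> c i)
         \<and> (\<forall>t. (\<Sum>i\<in>S. r i t) \<le> d t) \<and> (AE t in lborel. t \<in> {0..T} \<longrightarrow> (\<Sum>i\<in>S. r i t) = d t)"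
  using assms(1,2)
proof (induction S rule: finite_induct)
  case empty
  fix d :: "real \<Rightarrow> real"
  assume dm[measurable]: "d \<in> borel_measurable borel" and db: "\<forall>t. 0 \<le> d t \<and> d t \<le> D"
    and hall: "\<forall>A\<subseteq>{}. (\<integral>t. indicator {0..T} t * max 0 (d t - sum P ({} - A)) \<partial>lborel) \<le> sum c A"
  have h0: "(\<integral>t. indicator {0..T} t * d t \<partial>lborel) \<le> 0"
    using hall[rule_format, of "{}"] db by (simp add: max_def)
  have ii: "integrable lborel (\<lambda>t. indicator {0..T} t * d t)"
    by (rule int_ind[where B=D]) (use db in auto)
  have nn: "AE t in lborel. 0 \<le> indicator {0..T} t * d t" using db by auto
  have "(\<integral>t. indicator {0..T} t * d t \<partial>lborel) = 0"
    using h0 integral_nonneg_AE[OF nn] by linarith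
  then have "AE t in lborel. indicator {0..T} t * d t = 0"
    using integral_nonneg_eq_0_iff_AE[OF ii nn] by simp
  then have "AE t in lborel. t \<in> {0..T} \<longrightarrow> 0 = d t"
    by (rule AE_mp) (auto intro!: AE_I2)
  then show "\<exists>r. (\<forall>i\<in>{}. r i \<in> borel_measurable borel \<and> (\<forall>t. 0 \<le> r i t \<and> r i t \<le> P i)
              \<and> (\<integral>t. indicator {0..T} t * r i t \<partial>lborel) \<le> c i)
         \<and> (\<forall>t. (\<Sum>i\<in>{}. r i t) \<le> d t) \<and> (AE t in lborel. t \<in> {0..T} \<longrightarrow> (\<Sum>i\<in>{}. r i t) = d t)"
    using db by auto
next
  case (insert k F)
  fix d :: "real \<Rightarrow> real"
  assume dm[measurable]: "d \<in> borel_measurable borel" and db: "\<forall>t. 0 \<le> d t \<and> d t \<le> D"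
    and dmono: "mono_on {0..T} d"
    and hall: "\<forall>A\<subseteq>insert k F. (\<integral>t. indicator {0..T} t * max 0 (d t - sum P (insert k F - A)) \<partial>lborel) \<le> sum c A"
  define Q where "Q = P k"
  have Q0: "0 \<le> Q" using insert.prems Q_def by auto
  have D0: "0 \<le> D" using db by (meson order_trans)
  define u where "u = (\<lambda>a. \<integral>t. indicator {0..T} t * cl Q a (d t) \<partial>lborel)"
  have intcl: "integrable lborel (\<lambda>t. indicator {0..T} t * cl Q a (d t))" for a
    by (rule int_ind[where B=Q]) (use cl_lip[OF Q0] Q0 in \<open>auto simp: cl_def\<close>)
  have ck0: "0 \<le> c k"
  proof -
    have e: "insert k F - {k} = F" using insert.hyps by auto
    have "(\<integral>t. indicator {0..T} t * max 0 (d t - sum P F) \<partial>lborel) \<le> c k"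
      using hall[rule_format, of "{k}"] unfolding e by simp
    moreover have "0 \<le> (\<integral>t. indicator {0..T} t * max 0 (d t - sum P F) \<partial>lborel)"
      by (rule integral_nonneg_AE) auto
    ultimately show ?thesis by linarith
  qed
  have lip: "T-lipschitz_on UNIV u"
  proof (rule lipschitz_onI)
    fix x y :: real
    have "dist (u x) (u y) = \<bar>\<integral>t. indicator {0..T} t * cl Q x (d t) - indicator {0..T} t * cl Q y (d t) \<partial>lborel\<bar>"
      unfolding u_def dist_real_def by (subst Bochner_Integration.integral_diff[OF intcl intcl]) simp
    also have "\<dots> \<le> (\<integral>t. \<bar>x - y\<bar> * indicator {0..T} t \<partial>lborel)"
    proof (rule integral_abs_bound_integral)
      show "integrable lborel (\<lambda>t. indicator {0..T} t * cl Q x (d t) - indicator {0..T} t * cl Q y (d t))"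
        by (intro Bochner_Integration.integrable_diff intcl)
      show "integrable lborel (\<lambda>t. \<bar>x - y\<bar> * indicator {0..T} t)"
        by (intro integrable_mult_right integrable_real_indicator) (auto simp: emeasure_lborel_Icc_eq)
      fix t
      show "\<bar>indicator {0..T} t * cl Q x (d t) - indicator {0..T} t * cl Q y (d t)\<bar> \<le> \<bar>x - y\<bar> * indicator {0..T} t"
        using cl_lip[OF Q0, of x "d t" y] by (auto simp: indicator_def)
    qed
    also have "\<dots> = T * dist x y"
      using \<open>0 \<le> T\<close> by (simp add: dist_real_def)
    finally show "dist (u x) (u y) \<le> T * dist x y" .
  qed (use \<open>0 \<le> T\<close> in auto)
  have uD: "u D = 0"
  proof -
    have "cl Q D (d t) = 0" for t using db Q0 by (auto simp: cl_def)
    then show ?thesis unfolding u_def by simp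
  qed
  obtain a where a0: "0 \<le> a" and ua: "u a \<le> c k" and aor: "a = 0 \<or> u a = c k"
  proof (cases "u 0 \<le> c k")
    case True then show ?thesis using that[of 0] by auto
  next
    case False
    have "continuous_on {0..D} u"
      using lipschitz_on_continuous_on[OF lip] continuous_on_subset by blast
    then obtain x where "0 \<le> x" "x \<le> D" "u x = c k"
      using IVT2'[of u D "c k" 0] False uD ck0 D0 by auto
    then show ?thesis using that[of x] by auto
  qed
  define d' where "d' = (\<lambda>t. d t - cl Q a (d t))"
  have d'm[measurable]: "d' \<in> borel_measurable borel" unfolding d'_def by measurable
  have d'b: "\<forall>t. 0 \<le> d' t \<and> d' t \<le> D"
    using cl_bnd[OF Q0 a0] db unfolding d'_def by (smt (verit))
  have d'mono: "mono_on {0..T} d'"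
  proof (rule mono_onI)
    fix x y assume "x \<in> {0..T}" "y \<in> {0..T}" "x \<le> y"
    then have "d x \<le> d y" using dmono by (simp add: mono_onD)
    then show "d' x \<le> d' y" using cl_lip2[OF Q0 \<open>d x \<le> d y\<close>, of a] unfolding d'_def by linarith
  qed
  have hall': "\<forall>A\<subseteq>F. (\<integral>t. indicator {0..T} t * max 0 (d' t - sum P (F - A)) \<partial>lborel) \<le> sum c A"
  proof (intro allI impI)
    fix A assume AF: "A \<subseteq> F"
    define p where "p = sum P (F - A)"
    have p0: "0 \<le> p" unfolding p_def using insert.prems by (intro sum_nonneg) auto
    have kA: "k \<notin> A" using AF insert.hyps by auto
    show "(\<integral>t. indicator {0..T} t * max 0 (d' t - sum P (F - A)) \<partial>lborel) \<le> sum c A"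
    proof (cases "a \<le> p")
      case True
      have "(\<integral>t. indicator {0..T} t * max 0 (d' t - sum P (F - A)) \<partial>lborel)
          = (\<integral>t. indicator {0..T} t * max 0 (d t - sum P (insert k F - A)) \<partial>lborel)"
      proof (rule Bochner_Integration.integral_cong[OF refl])
        fix t
        have "insert k F - A = insert k (F - A)" using kA by auto
        then have "sum P (insert k F - A) = p + Q"
          using insert.hyps unfolding p_def Q_def by simp
        then show "indicator {0..T} t * max 0 (d' t - sum P (F - A)) = indicator {0..T} t * max 0 (d t - sum P (insert k F - A))"
          using cl_case1[OF Q0 True, of "d t"] db unfolding d'_def p_def by simp
      qed
      also have "\<dots> \<le> sum c A" using hall AF by auto
      finally show ?thesis .
    next
      case False
      then have uck: "u a = c k" using aor p0 by auto
      have dbp: "\<And>t. d t - p \<le> D" using db p0 by (smt (verit))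
      have "(\<integral>t. indicator {0..T} t * max 0 (d' t - sum P (F - A)) \<partial>lborel)
          = (\<integral>t. indicator {0..T} t * max 0 (d t - p) - indicator {0..T} t * cl Q a (d t) \<partial>lborel)"
      proof (rule Bochner_Integration.integral_cong[OF refl])
        fix t
        show "indicator {0..T} t * max 0 (d' t - sum P (F - A)) = indicator {0..T} t * max 0 (d t - p) - indicator {0..T} t * cl Q a (d t)"
          using cl_case2[OF Q0, of p a "d t"] False db unfolding d'_def p_def by (simp add: right_diff_distrib)
      qed
      also have "\<dots> = (\<integral>t. indicator {0..T} t * max 0 (d t - p) \<partial>lborel) - u a"
        unfolding u_def
        by (rule Bochner_Integration.integral_diff[OF _ intcl], rule int_ind[where B=D]) (use db p0 dbp in auto)
      also have "(\<integral>t. indicator {0..T} t * max 0 (d t - p) \<partial>lborel) \<le> sum c (insert k A)"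
      proof -
        have "insert k F - insert k A = F - A" using insert.hyps by auto
        then show ?thesis using hall[rule_format, of "insert k A"] AF unfolding p_def by auto
      qed
      then have "(\<integral>t. indicator {0..T} t * max 0 (d t - p) \<partial>lborel) - u a \<le> sum c A"
        using uck kA AF insert.hyps(1) finite_subset[OF AF] by simp
      finally show ?thesis .
    qed
  qed
  obtain r where r1: "\<forall>i\<in>F. r i \<in> borel_measurable borel \<and> (\<forall>t. 0 \<le> r i t \<and> r i t \<le> P i)
              \<and> (\<integral>t. indicator {0..T} t * r i t \<partial>lborel) \<le> c i"
    and r2: "\<forall>t. (\<Sum>i\<in>F. r i t) \<le> d' t" and r3: "AE t in lborel. t \<in> {0..T} \<longrightarrow> (\<Sum>i\<in>F. r i t) = d' t"
    using insert.IH[OF d'm d'b d'mono hall'] insert.prems by auto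
  define r' where "r' = r(k := (\<lambda>t. cl Q a (d t)))"
  have sumeq: "(\<Sum>i\<in>insert k F. r' i t) = cl Q a (d t) + (\<Sum>i\<in>F. r i t)" for t
  proof -
    have "(\<Sum>i\<in>F. r' i t) = (\<Sum>i\<in>F. r i t)"
      using insert.hyps by (intro sum.cong) (auto simp: r'_def)
    then show ?thesis using insert.hyps by (simp add: r'_def)
  qed
  show "\<exists>r. (\<forall>i\<in>insert k F. r i \<in> borel_measurable borel \<and> (\<forall>t. 0 \<le> r i t \<and> r i t \<le> P i)
              \<and> (\<integral>t. indicator {0..T} t * r i t \<partial>lborel) \<le> c i)
         \<and> (\<forall>t. (\<Sum>i\<in>insert k F. r i t) \<le> d t) \<and> (AE t in lborel. t \<in> {0..T} \<longrightarrow> (\<Sum>i\<in>insert k F. r i t) = d t)"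
  proof (intro exI[of _ r'] conjI)
    show "\<forall>i\<in>insert k F. r' i \<in> borel_measurable borel \<and> (\<forall>t. 0 \<le> r' i t \<and> r' i t \<le> P i)
              \<and> (\<integral>t. indicator {0..T} t * r' i t \<partial>lborel) \<le> c i"
    proof (intro ballI conjI)
    fix i assume i: "i \<in> insert k F"
    show "r' i \<in> borel_measurable borel"
      using i r1 by (cases "i = k") (auto simp: r'_def)
    show "\<forall>t. 0 \<le> r' i t \<and> r' i t \<le> P i"
      using i r1 cl_bnd[OF Q0 a0] db by (cases "i = k") (auto simp: r'_def Q_def)
    show "(\<integral>t. indicator {0..T} t * r' i t \<partial>lborel) \<le> c i"
      using i r1 ua insert.hyps by (cases "i = k") (auto simp: r'_def u_def)
    qed
  next
    show "\<forall>t. (\<Sum>i\<in>insert k F. r' i t) \<le> d t"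
      using sumeq r2 unfolding d'_def by (smt (verit))
  next
    show "AE t in lborel. t \<in> {0..T} \<longrightarrow> (\<Sum>i\<in>insert k F. r' i t) = d t"
      using r3 by (rule AE_mp) (auto intro!: AE_I2 simp: sumeq d'_def)
  qed
qed

lemma gross_le:
  fixes S A :: "'a set" and eta P :: "'a \<Rightarrow> real"
  assumes "finite S" "A \<subseteq> S" "\<forall>i\<in>S. 0 < eta i \<and> eta i \<le> 1 \<and> 0 < P i" "\<forall>i\<in>S. r i t \<le> P i"
  shows "gross_draw S eta r t \<le> (\<Sum>i\<in>A. r i t) + sum P (S - A)"
proof -
  let ?g = "\<lambda>i. if 0 \<le> r i t then r i t else r i t / eta i"
  have "gross_draw S eta r t = (\<Sum>i\<in>A. ?g i) + (\<Sum>i\<in>S - A. ?g i)"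
    unfolding gross_draw_def by (simp add: sum.subset_diff[OF assms(2,1)])
  also have "(\<Sum>i\<in>A. ?g i) \<le> (\<Sum>i\<in>A. r i t)"
  proof (rule sum_mono)
    fix i assume "i \<in> A"
    then have e: "0 < eta i" "eta i \<le> 1" using assms by auto
    show "?g i \<le> r i t"
    proof (cases "0 \<le> r i t")
      case False
      then have "r i t \<le> r i t * eta i" using e mult_left_mono_neg[of "eta i" 1 "r i t"] by simp
      then show ?thesis using False e by (simp add: divide_le_eq)
    qed simp
  qed
  also have "(\<Sum>i\<in>S - A. ?g i) \<le> sum P (S - A)"
  proof (rule sum_mono)
    fix i assume "i \<in> S - A"
    then have e: "0 < eta i" "0 < P i" "r i t \<le> P i" using assms by auto
    show "?g i \<le> P i"
    proof (cases "0 \<le> r i t")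
      case False
      then have "r i t / eta i < 0" using e by (simp add: divide_neg_pos)
      then show ?thesis using False e by simp
    qed (use e in simp)
  qed
  finally show ?thesis by simp
qed


theorem theorem3:
  fixes S :: "'a set" and Ebar P P' eta :: "'a \<Rightarrow> real"
    and d :: "real \<Rightarrow> real" and T :: real and r :: "'a \<Rightarrow> real \<Rightarrow> real"
  assumes "finite S"
    and "\<forall>i\<in>S. 0 < Ebar i \<and> 0 < P i \<and> 0 \<le> P' i \<and> 0 < eta i \<and> eta i \<le> 1"
    and "0 < T"
    and "\<forall>t\<in>{0..T}. 0 \<le> d t"
    and "set_integrable lborel {0..T} d"
    and "mono_on {0..T} d"
    and "is_policy S Ebar P P' eta d T Ebar r"
    and "completely_serves S eta r d {0..T}"
  shows "\<exists>r'. (\<forall>i\<in>S. \<forall>t\<in>{0..T}. 0 \<le> r' i t)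
           \<and> is_policy S Ebar P P' eta d T Ebar r'
           \<and> completely_serves S eta r' d {0..T}
           \<and> (\<forall>i\<in>S. level Ebar r' i T \<ge> level Ebar r i T)"
proof -
  note par = assms(2)
  have T0: "0 \<le> T" using assms(3) by simp
  have rm: "\<forall>i\<in>S. set_borel_measurable lborel {0..T} (r i)"
    and rb: "\<forall>i\<in>S. \<forall>t\<in>{0..T}. 0 \<le> level Ebar r i t \<and> level Ebar r i t \<le> Ebar i
                       \<and> - P' i \<le> r i t \<and> r i t \<le> P i"
    and gb: "\<forall>t\<in>{0..T}. 0 \<le> gross_draw S eta r t \<and> gross_draw S eta r t \<le> d t"
    using assms(7) unfolding is_policy_def by auto
  have ae: "AE t in lborel. t \<in> {0..T} \<longrightarrow> gross_draw S eta r t = d t"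
    using assms(8) unfolding completely_serves_def by auto
  define rr where "rr i t = indicator {0..T} t * r i t" for i t
  have rrm[measurable]: "rr i \<in> borel_measurable borel" if "i \<in> S" for i
    using rm that unfolding set_borel_measurable_def rr_def by simp
  have rrb: "\<bar>rr i t\<bar> \<le> P i + P' i" if "i \<in> S" for i t
  proof (cases "t \<in> {0..T}")
    case True then have "- P' i \<le> r i t" "r i t \<le> P i" using rb that by auto
    moreover have "0 < P i" "0 \<le> P' i" using par that by auto
    ultimately show ?thesis using True unfolding rr_def by (simp add: abs_le_iff)
  next
    case False then have "rr i t = 0" unfolding rr_def by simp
    moreover have "0 < P i" "0 \<le> P' i" using par that by auto
    ultimately show ?thesis by simp
  qed
  have rX: "(\<lambda>t. indicator X t * r i t) = (\<lambda>t. indicator X t * rr i t)" if "X \<subseteq> {0..T}" for X i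
    using that unfolding rr_def by (intro ext) (auto simp: indicator_def subset_iff)
  have rXi: "integrable lborel (\<lambda>t. indicator X t * r i t)"
    if "i \<in> S" "X \<in> sets lborel" "X \<subseteq> {0..T}" for X i
    unfolding rX[OF that(3)] by (rule int_ind[OF rrm[OF that(1)] rrb[OF that(1)] that(2,3)])
  have lev: "level Ebar r i t = Ebar i - (\<integral>u. indicator {0..t} u * r i u \<partial>lborel)" for i t
    unfolding level_def set_lebesgue_integral_def by simp
  have levr': "level Ebar r' i t = Ebar i - (\<integral>u. indicator {0..t} u * r' i u \<partial>lborel)" for r' i t
    unfolding level_def set_lebesgue_integral_def by simp
  define dd where "dd t = indicator {0..T} t * d t" for t
  have ddm[measurable]: "dd \<in> borel_measurable borel"
  proof -
    have "integrable lborel (\<lambda>x. indicator {0..T} x *\<^sub>R d x)" using assms(5) unfolding set_integrable_def .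
    then have "(\<lambda>x. indicator {0..T} x *\<^sub>R d x) \<in> borel_measurable lborel" by (rule borel_measurable_integrable)
    then show ?thesis unfolding dd_def by simp
  qed
  have dT: "d t \<le> d T" if "t \<in> {0..T}" for t
    using assms(6) that T0 by (auto intro: mono_onD)
  have ddb: "\<forall>t. 0 \<le> dd t \<and> dd t \<le> d T"
    using assms(4) dT T0 unfolding dd_def by (auto simp: indicator_def)
  have ddmono: "mono_on {0..T} dd"
    using assms(6) unfolding dd_def by (auto simp: mono_on_def)
  define c where "c i = (\<integral>t. indicator {0..T} t * r i t \<partial>lborel)" for i
  have hall: "\<forall>A\<subseteq>S. (\<integral>t. indicator {0..T} t * max 0 (dd t - sum P (S - A)) \<partial>lborel) \<le> sum c A"
  proof (intro allI impI)
    fix A assume AS: "A \<subseteq> S"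
    define q where "q = sum P (S - A)"
    have q0: "0 \<le> q" unfolding q_def using par by (intro sum_nonneg) auto
    define J where "J = {t \<in> {0..T}. q < d t}"
    define \<tau> where "\<tau> = (if J = {} then T else Inf J)"
    have tau: "0 \<le> \<tau> \<and> \<tau> \<le> T"
    proof (cases "J = {}")
      case False
      then obtain s where s: "s \<in> J" by auto
      have bdd: "bdd_below J" unfolding J_def by (rule bdd_belowI[of _ 0]) auto
      have "0 \<le> Inf J" using False by (intro cInf_greatest) (auto simp: J_def)
      moreover have "Inf J \<le> s" using cInf_lower[OF s bdd] .
      ultimately show ?thesis using False s unfolding \<tau>_def J_def by auto
    qed (use T0 \<tau>_def in auto)
    have key1: "t \<in> J \<longleftrightarrow> t \<in> {\<tau><..T}" if "t \<noteq> \<tau>" for t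
    proof (cases "J = {}")
      case True then show ?thesis using that by (auto simp: \<tau>_def)
    next
      case False
      have bdd: "bdd_below J" unfolding J_def by (rule bdd_belowI[of _ 0]) auto
      show ?thesis
      proof
        assume tJ: "t \<in> J"
        have "Inf J \<le> t" by (rule cInf_lower[OF tJ bdd])
        moreover have "\<tau> = Inf J" using False unfolding \<tau>_def by simp
        ultimately have "\<tau> < t" using that by auto
        moreover have "t \<le> T" using tJ unfolding J_def by auto
        ultimately show "t \<in> {\<tau><..T}" by auto
      next
        assume tt: "t \<in> {\<tau><..T}"
        then have "Inf J < t" using False by (simp add: \<tau>_def)
        then obtain s where s: "s \<in> J" "s < t" using cInf_less_iff[OF False bdd] by auto
        have s0: "s \<in> {0..T}" using s unfolding J_def by blast
        have t0: "t \<in> {0..T}" using tt tau by auto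
        have "d s \<le> d t" by (rule mono_onD[OF assms(6) s0 t0]) (use s in simp)
        then show "t \<in> J" using s tt tau by (auto simp: J_def)
      qed
    qed
    have per: "(\<integral>t. indicator {\<tau><..T} t * r i t \<partial>lborel) \<le> c i" if i: "i \<in> S" for i
    proof -
      have "c i = (\<integral>t. indicator {0..\<tau>} t * r i t + indicator {\<tau><..T} t * r i t \<partial>lborel)"
        unfolding c_def
        by (rule Bochner_Integration.integral_cong[OF refl]) (use tau in \<open>auto simp: indicator_def\<close>)
      also have "\<dots> = (\<integral>t. indicator {0..\<tau>} t * r i t \<partial>lborel) + (\<integral>t. indicator {\<tau><..T} t * r i t \<partial>lborel)"
        by (rule Bochner_Integration.integral_add; rule rXi[OF i]) (use tau in auto)
      finally have "c i = \<dots>" .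
      moreover have "0 \<le> (\<integral>t. indicator {0..\<tau>} t * r i t \<partial>lborel)"
      proof -
        have "level Ebar r i \<tau> \<le> Ebar i" using rb i tau by auto
        then show ?thesis using lev[of i \<tau>] by linarith
      qed
      ultimately show ?thesis by linarith
    qed
    have ig: "integrable lborel (\<lambda>t. indicator {\<tau><..T} t * (\<Sum>i\<in>A. r i t))"
      unfolding sum_distrib_left
      by (rule Bochner_Integration.integrable_sum, rule rXi) (use AS tau in auto)
    have "(\<integral>t. indicator {0..T} t * max 0 (dd t - sum P (S - A)) \<partial>lborel)
        \<le> (\<integral>t. indicator {\<tau><..T} t * (\<Sum>i\<in>A. r i t) \<partial>lborel)"
    proof (rule integral_mono_AE)
      show "integrable lborel (\<lambda>t. indicator {0..T} t * max 0 (dd t - sum P (S - A)))"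
      proof (rule int_ind[where B="d T"])
        fix t
        have "dd t \<le> d T" "0 \<le> dd t" using ddb by auto
        then show "\<bar>max 0 (dd t - sum P (S - A))\<bar> \<le> d T" using q0 unfolding q_def by (simp add: max_def)
      qed auto
      show "integrable lborel (\<lambda>t. indicator {\<tau><..T} t * (\<Sum>i\<in>A. r i t))" by (rule ig)
      show "AE t in lborel. indicator {0..T} t * max 0 (dd t - sum P (S - A)) \<le> indicator {\<tau><..T} t * (\<Sum>i\<in>A. r i t)"
        using ae AE_lborel_singleton[of \<tau>]
      proof (eventually_elim)
        case (elim t)
        show ?case
        proof (cases "t \<in> {0..T}")
          case False
          have "t \<notin> {\<tau><..T}" using False tau by auto
          then show ?thesis using False by simp
        next
          case tin: True
          have ddt: "dd t = d t" using tin by (simp add: dd_def)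
          show ?thesis
          proof (cases "t \<in> J")
            case False
            have "d t \<le> q" using False tin unfolding J_def by auto
            then have m0: "max 0 (dd t - sum P (S - A)) = 0" unfolding ddt q_def by simp
            have "t \<notin> {\<tau><..T}" using key1[OF elim(2)] False by simp
            then show ?thesis using m0 by simp
          next
            case True
            have "gross_draw S eta r t \<le> (\<Sum>i\<in>A. r i t) + q"
              unfolding q_def by (rule gross_le[OF assms(1) AS]) (use par rb tin in auto)
            moreover have "gross_draw S eta r t = d t" using elim(1) tin by simp
            moreover have "q < d t" using True unfolding J_def by simp
            moreover have "t \<in> {\<tau><..T}" using key1[OF elim(2)] True by simp
            ultimately show ?thesis using tin unfolding ddt q_def[symmetric] by (simp add: max_def)
          qed
        qed
      qed
    qed
    also have "\<dots> = (\<Sum>i\<in>A. \<integral>t. indicator {\<tau><..T} t * r i t \<partial>lborel)"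
      unfolding sum_distrib_left
      by (rule Bochner_Integration.integral_sum, rule rXi) (use AS tau in auto)
    also have "\<dots> \<le> sum c A" using per AS by (intro sum_mono) auto
    finally show "(\<integral>t. indicator {0..T} t * max 0 (dd t - sum P (S - A)) \<partial>lborel) \<le> sum c A" .
  qed
  have P0: "\<forall>i\<in>S. 0 \<le> P i" using par by (simp add: less_imp_le)
  obtain r' where r1: "\<forall>i\<in>S. r' i \<in> borel_measurable borel \<and> (\<forall>t. 0 \<le> r' i t \<and> r' i t \<le> P i)
              \<and> (\<integral>t. indicator {0..T} t * r' i t \<partial>lborel) \<le> c i"
    and r2: "\<forall>t. (\<Sum>i\<in>S. r' i t) \<le> dd t" and r3: "AE t in lborel. t \<in> {0..T} \<longrightarrow> (\<Sum>i\<in>S. r' i t) = dd t"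
    using alloc[OF assms(1) P0 T0 ddm ddb ddmono hall] by blast
  have gd': "gross_draw S eta r' t = (\<Sum>i\<in>S. r' i t)" for t
    unfolding gross_draw_def using r1 by (intro sum.cong) auto
  have ci: "c i = Ebar i - level Ebar r i T" for i
    unfolding lev c_def by simp
  have intr': "integrable lborel (\<lambda>u. indicator X u * r' i u)" if "i \<in> S" "X \<in> sets lborel" "X \<subseteq> {0..T}" for i X
    by (rule int_ind[where B="P i"]) (use r1 that in auto)
  show ?thesis
  proof (intro exI[of _ r'] conjI)
    show "\<forall>i\<in>S. \<forall>t\<in>{0..T}. 0 \<le> r' i t" using r1 by auto
    show "completely_serves S eta r' d {0..T}"
      unfolding completely_serves_def gd' using r3 by (rule AE_mp) (auto intro!: AE_I2 simp: dd_def)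
    show "\<forall>i\<in>S. level Ebar r i T \<le> level Ebar r' i T"
      using r1 unfolding levr' ci by auto
    show "is_policy S Ebar P P' eta d T Ebar r'"
      unfolding is_policy_def
    proof (intro conjI ballI)
      fix i assume i: "i \<in> S"
      have [measurable]: "r' i \<in> borel_measurable borel" using r1 i by auto
      show "set_borel_measurable lborel {0..T} (r' i)"
        unfolding set_borel_measurable_def by measurable
      fix t assume t: "t \<in> {0..T}"
      have "0 \<le> (\<integral>u. indicator {0..t} u * r' i u \<partial>lborel)"
        using r1 i by (intro integral_nonneg_AE) auto
      then show "level Ebar r' i t \<le> Ebar i" unfolding levr' by simp
      have "(\<integral>u. indicator {0..t} u * r' i u \<partial>lborel) \<le> (\<integral>u. indicator {0..T} u * r' i u \<partial>lborel)"
        by (rule Bochner_Integration.integral_mono[OF intr' intr']) (use i t r1 in \<open>auto simp: indicator_def\<close>)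
      moreover have "0 \<le> level Ebar r i T" using rb i T0 by auto
      ultimately show "0 \<le> level Ebar r' i t" using r1 i unfolding levr' ci by fastforce
      show "- P' i \<le> r' i t" using r1 i par by (smt (verit))
      show "r' i t \<le> P i" using r1 i by auto
    next
      fix t assume t: "t \<in> {0..T}"
      show "0 \<le> gross_draw S eta r' t" unfolding gd' using r1 by (intro sum_nonneg) auto
      show "gross_draw S eta r' t \<le> d t" unfolding gd' using r2[rule_format, of t] t by (simp add: dd_def)
    qed
  qed
qed

end
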